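(* Let $S,T\subseteq\mathbb{Z}_{>0}$ be finite and $S'\subseteq S$. Then $T\triangleleft S'\subseteq T\triangleleft S$.
   Context: For finite $S,T\subseteq\mathbb{Z}_{>0}$, $T\triangleleft S$ is computed by going through the elements of $S$ from largest to smallest; each $s$ picks the largest element of $T$ that is less than $s$ and not yet picked (if one exists); $T\triangleleft S$ is the set of picked elements. *)

theory Defs
  imports Main
begin

(* One step of the procedure: element s picks the largest not-yet-picked
   element of T that is less than s (if one exists).
   State: (elements of T not yet picked, picked elements). *)
definition pick_step :: "nat \<Rightarrow> nat set \<times> nat set \<Rightarrow> nat set \<times> nat set" where
  "pick_step s st =
     (let C = {t \<in> fst st. t < s} in
      if C = {} then st
      else (fst st - {Max C}, insert (Max C) (snd st)))"

definition tri :: "nat set \<Rightarrow> nat set \<Rightarrow> nat set" (infix "\<triangleleft>" 60) where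
  "T \<triangleleft> S = snd (fold pick_step (rev (sorted_list_of_set S)) (T, {}))"

end

theory Submission
  imports Defs
begin

definition Rel :: "nat set \<Rightarrow> nat set \<times> nat set \<Rightarrow> nat set \<times> nat set \<Rightarrow> bool" where
  "Rel T a b \<longleftrightarrow> fst a = T - snd a \<and> fst b = T - snd b \<and> snd b \<subseteq> snd a"

lemma step_left:
  assumes "Rel T a b" "finite T"
  shows "Rel T (pick_step s a) b"
  using assms unfolding Rel_def pick_step_def Let_def by auto

lemma step_both:
  assumes "Rel T a b" "finite T"
  shows "Rel T (pick_step s a) (pick_step s b)"
proof -
  obtain R1 P1 R2 P2 where a: "a = (R1, P1)" and b: "b = (R2, P2)" by (cases a, cases b) auto
  have r1: "R1 = T - P1" and r2: "R2 = T - P2" and sub: "P2 \<subseteq> P1"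
    using assms(1) a b unfolding Rel_def by auto
  define C1 where "C1 = {t \<in> R1. t < s}"
  define C2 where "C2 = {t \<in> R2. t < s}"
  have f1: "finite C1" and f2: "finite C2" using assms(2) r1 r2 unfolding C1_def C2_def by auto
  show ?thesis
  proof (cases "C2 = {}")
    case True
    then show ?thesis using step_left[OF assms] a b
      by (simp add: pick_step_def C2_def Let_def)
  next
    case False
    define m2 where "m2 = Max C2"
    have m2in: "m2 \<in> C2" using False f2 m2_def by auto
    have key: "m2 \<in> snd (pick_step s a)"
    proof (cases "m2 \<in> P1")
      case True
      then show ?thesis using a by (auto simp: pick_step_def Let_def)
    next
      case nP: False
      have "m2 \<in> C1" using m2in nP r1 r2 unfolding C1_def C2_def by auto
      hence ne: "C1 \<noteq> {}" by auto
      have "Max C1 \<in> C1" using ne f1 by auto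
      hence "Max C1 \<in> C2" using r1 r2 sub unfolding C1_def C2_def by auto
      hence "Max C1 \<le> m2" using f2 m2_def by auto
      moreover have "m2 \<le> Max C1" using \<open>m2 \<in> C1\<close> f1 by auto
      ultimately have "Max C1 = m2" by simp
      then show ?thesis using a ne unfolding C1_def by (auto simp: pick_step_def Let_def)
    qed
    have "snd (pick_step s b) = insert m2 P2" using b False
      unfolding pick_step_def Let_def C2_def m2_def by (simp only: fst_conv snd_conv if_False)
    moreover have "P1 \<subseteq> snd (pick_step s a)" using a by (auto simp: pick_step_def Let_def)
    ultimately have "snd (pick_step s b) \<subseteq> snd (pick_step s a)" using key sub by auto
    moreover have "fst (pick_step s a) = T - snd (pick_step s a)"
      using step_left[OF assms] unfolding Rel_def by simp
    moreover have "fst (pick_step s b) = T - snd (pick_step s b)"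
      using step_left[OF _ assms(2), of b b s] assms(1) unfolding Rel_def by auto
    ultimately show ?thesis unfolding Rel_def by simp
  qed
qed

lemma fold_rel:
  assumes "Rel T a b" "finite T"
  shows "Rel T (fold pick_step xs a) (fold pick_step (filter P xs) b)"
  using assms(1)
proof (induction xs arbitrary: a b)
  case Nil
  then show ?case by simp
next
  case (Cons x xs)
  show ?case
  proof (cases "P x")
    case True
    then show ?thesis using Cons.IH[OF step_both[OF Cons.prems assms(2)]] by simp
  next
    case False
    then show ?thesis using Cons.IH[OF step_left[OF Cons.prems assms(2)]] by simp
  qed
qed

theorem lemma4p14:
  fixes S T S' :: "nat set"
  assumes "finite S" and "finite T"
    and "\<forall>x\<in>S. x > 0" and "\<forall>x\<in>T. x > 0"
    and "S' \<subseteq> S"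
  shows "T \<triangleleft> S' \<subseteq> T \<triangleleft> S"
proof -
  have fS': "finite S'" using assms(1,5) finite_subset by blast
  have "sorted_list_of_set S' = filter (\<lambda>x. x \<in> S') (sorted_list_of_set S)"
    using assms(1,5) fS'
    by (intro sorted_distinct_set_unique) (auto intro: sorted_wrt_filter)
  hence eq: "rev (sorted_list_of_set S') = filter (\<lambda>x. x \<in> S') (rev (sorted_list_of_set S))"
    by (simp add: rev_filter)
  have "Rel T (T, {}) (T, {})" unfolding Rel_def by simp
  from fold_rel[OF this assms(2), of "rev (sorted_list_of_set S)" "\<lambda>x. x \<in> S'"]
  show ?thesis unfolding tri_def eq[symmetric] Rel_def by simp
qed

end
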